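(* There is an absolute constant $C>0$ such that the following holds. Let $B=(U\cup V,E)$ be a bipartite graph with $n\ge2$ nodes in which every node of $U$ has degree at least $d$ and every node of $V$ has degree at most $f<d$. Let $M$ be any matching of $B$ and let $s\in U$ be a node not matched by $M$. Then there is an augmenting path for $M$ starting at $s$ of length at most $C\,d\log n$.
   Context: An augmenting path for a matching $M$ is a path whose edges alternate between edges not in $M$ and edges in $M$, and whose two endpoints are both unmatched by $M$ (so it starts and ends with non-$M$ edges). *)

theory Defs
  imports Complex_Main
begin

definition bipartite_graph :: "nat set \<Rightarrow> nat set \<Rightarrow> (nat \<times> nat) set \<Rightarrow> bool" where
  "bipartite_graph U V E \<longleftrightarrow> finite U \<and> finite V \<and> U \<inter> V = {} \<and> E \<subseteq> U \<times> V"

definition degree :: "(nat \<times> nat) set \<Rightarrow> nat \<Rightarrow> nat" where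
  "degree E x = card {y. (x, y) \<in> E \<or> (y, x) \<in> E}"

definition matching :: "(nat \<times> nat) set \<Rightarrow> (nat \<times> nat) set \<Rightarrow> bool" where
  "matching E M \<longleftrightarrow> M \<subseteq> E \<and>
     (\<forall>e1\<in>M. \<forall>e2\<in>M. e1 \<noteq> e2 \<longrightarrow>
        fst e1 \<noteq> fst e2 \<and> snd e1 \<noteq> snd e2 \<and> fst e1 \<noteq> snd e2 \<and> snd e1 \<noteq> fst e2)"

definition matched :: "(nat \<times> nat) set \<Rightarrow> nat \<Rightarrow> bool" where
  "matched M x \<longleftrightarrow> (\<exists>e\<in>M. fst e = x \<or> snd e = x)"

definition has_edge :: "(nat \<times> nat) set \<Rightarrow> nat \<Rightarrow> nat \<Rightarrow> bool" where
  "has_edge E a b \<longleftrightarrow> (a, b) \<in> E \<or> (b, a) \<in> E"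

definition augmenting_path :: "(nat \<times> nat) set \<Rightarrow> (nat \<times> nat) set \<Rightarrow> nat list \<Rightarrow> bool" where
  "augmenting_path E M p \<longleftrightarrow>
     length p \<ge> 2 \<and> distinct p \<and>
     (\<forall>i < length p - 1. has_edge E (p ! i) (p ! Suc i)) \<and>
     (\<forall>i < length p - 1. has_edge M (p ! i) (p ! Suc i) \<longleftrightarrow> odd i) \<and>
     \<not> matched M (hd p) \<and> \<not> matched M (last p)"

end

theory Submission
  imports Defs
begin

locale aug =
  fixes U V E d f M s
  assumes bip: "bipartite_graph U V E"
    and degU: "\<forall>u\<in>U. degree E u \<ge> d"
    and degV: "\<forall>v\<in>V. degree E v \<le> f"
    and fd: "f < d" and mat: "matching E M" and sU: "s \<in> U" and sun: "\<not> matched M s"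
begin

lemma finU: "finite U" and finV: "finite V" and disj: "U \<inter> V = {}" and EUV: "E \<subseteq> U \<times> V"
  using bip by (auto simp: bipartite_graph_def)

lemma ME: "M \<subseteq> E" using mat by (simp add: matching_def)

lemma M_uniq: "(a, v) \<in> M \<Longrightarrow> (b, v) \<in> M \<Longrightarrow> a = b"
  using mat unfolding matching_def by fastforce

lemma M_uniq2: "(u, a) \<in> M \<Longrightarrow> (u, b) \<in> M \<Longrightarrow> a = b"
  using mat unfolding matching_def by fastforce

lemma EU: "(a, b) \<in> E \<Longrightarrow> a \<in> U" and EV: "(a, b) \<in> E \<Longrightarrow> b \<in> V"
  using EUV by auto

primrec R :: "nat \<Rightarrow> nat set" where
  "R 0 = {s}"
| "R (Suc k) = R k \<union> {u'. \<exists>u\<in>R k. \<exists>v. (u, v) \<in> E \<and> (u, v) \<notin> M \<and> (u', v) \<in> M}"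

definition dist :: "nat \<Rightarrow> nat" where "dist u = (LEAST k. u \<in> R k)"

definition good :: "nat \<Rightarrow> bool" where
  "good k \<longleftrightarrow> (\<exists>u\<in>R k. \<exists>v. (u, v) \<in> E \<and> \<not> matched M v)"

lemma R_mono: "j \<le> k \<Longrightarrow> R j \<subseteq> R k"
  by (rule lift_Suc_mono_le[of R]) auto

lemma R_sub: "R k \<subseteq> U"
  using sU ME EU by (induction k) auto

lemma dist_le: "u \<in> R k \<Longrightarrow> dist u \<le> k"
  unfolding dist_def by (rule Least_le)

lemma dist_in: "u \<in> R k \<Longrightarrow> u \<in> R (dist u)"
  unfolding dist_def by (rule LeastI)

definition inv :: "nat list \<Rightarrow> bool" where
  "inv p \<longleftrightarrow> (\<forall>i<length p. (even i \<longrightarrow> p!i \<in> U \<and> dist (p!i) = i div 2) \<and>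
     (odd i \<longrightarrow> p!i \<in> V \<and> (p!(i-1), p!i) \<in> E \<and> (p!(i-1), p!i) \<notin> M \<and> (p!(i+1), p!i) \<in> M))"

lemma path_ex: "u \<in> R k \<Longrightarrow> \<exists>p. length p = 2 * dist u + 1 \<and> hd p = s \<and> last p = u \<and> inv p"
proof (induction k arbitrary: u)
  case 0
  then have u: "u = s" by simp
  have "dist s = 0" using dist_le[of s 0] by simp
  then show ?case using u sU by (intro exI[of _ "[s]"]) (auto simp: inv_def)
next
  case (Suc k)
  show ?case
  proof (cases "u \<in> R k")
    case True then show ?thesis using Suc.IH by blast
  next
    case False
    then obtain u0 v where u0: "u0 \<in> R k" "(u0, v) \<in> E" "(u0, v) \<notin> M" "(u, v) \<in> M"
      using Suc.prems by auto
    have du: "dist u = Suc k"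
      unfolding dist_def
    proof (rule Least_equality)
      show "u \<in> R (Suc k)" by fact
      fix j assume "u \<in> R j"
      then show "Suc k \<le> j" using False R_mono[of j k] by (cases "j \<le> k") auto
    qed
    have du0: "dist u0 = k"
    proof (rule ccontr)
      assume "dist u0 \<noteq> k"
      then have lt: "dist u0 < k" using dist_le[OF u0(1)] by simp
      have "u \<in> R (Suc (dist u0))" using dist_in[OF u0(1)] u0 by auto
      then have "u \<in> R k" using R_mono[of "Suc (dist u0)" k] lt by auto
      then show False using False by simp
    qed
    obtain p0 where p0: "length p0 = 2 * k + 1" "hd p0 = s" "last p0 = u0" "inv p0"
      using Suc.IH[OF u0(1)] du0 by auto
    have lp0: "p0 ! (2*k) = u0" proof -
      have "p0 \<noteq> []" using p0(1) by auto
      then show ?thesis using p0(1,3) last_conv_nth[of p0] by simp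
    qed
    define p where "p = p0 @ [v, u]"
    have pl: "length p = 2 * dist u + 1" using p0(1) du by (simp add: p_def)
    have ph: "hd p = s" using p0 by (cases p0) (auto simp: p_def)
    have pla: "last p = u" by (simp add: p_def)
    have "inv p"
      unfolding inv_def
    proof (intro allI impI)
      fix i assume i: "i < length p"
      show "(even i \<longrightarrow> p!i \<in> U \<and> dist (p!i) = i div 2) \<and>
     (odd i \<longrightarrow> p!i \<in> V \<and> (p!(i-1), p!i) \<in> E \<and> (p!(i-1), p!i) \<notin> M \<and> (p!(i+1), p!i) \<in> M)"
      proof (cases "i < 2*k+1")
        case True
        have a: "p ! i = p0 ! i" using True p0(1) by (simp add: p_def nth_append)
        have b: "odd i \<Longrightarrow> p ! (i-1) = p0 ! (i-1) \<and> p ! (i+1) = p0 ! (i+1)"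
          using True p0(1) by (auto simp: p_def nth_append elim!: oddE)
        show ?thesis using p0(4) True p0(1) a b unfolding inv_def by auto
      next
        case False
        then have "i = 2*k+1 \<or> i = 2*k+2" using i p0(1) by (auto simp: p_def)
        then show ?thesis
        proof
          assume i1: "i = 2*k+1"
          have "p ! i = v" "p ! (i-1) = u0" "p ! (i+1) = u"
            using i1 p0(1) lp0 by (auto simp: p_def nth_append)
          then show ?thesis using i1 u0 EV by auto
        next
          assume i2: "i = 2*k+2"
          have "p ! i = u" using i2 p0(1) by (simp add: p_def nth_append)
          then show ?thesis using i2 du u0(4) ME EU by auto
        qed
      qed
    qed
    then show ?thesis using pl ph pla by blast
  qed
qed

lemma matched_V: "v \<in> V \<Longrightarrow> matched M v \<longleftrightarrow> (\<exists>u. (u, v) \<in> M)"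
  using ME EUV disj unfolding matched_def by force

lemma aug_ex:
  assumes "good k"
  shows "\<exists>p. augmenting_path E M p \<and> hd p = s \<and> length p - 1 \<le> 2 * k + 1"
proof -
  obtain u v where uv: "u \<in> R k" "(u, v) \<in> E" "\<not> matched M v"
    using assms unfolding good_def by auto
  have uvM: "(u, v) \<notin> M" using uv(3) unfolding matched_def by force
  have vV: "v \<in> V" using uv EV by auto
  obtain p0 where p0: "length p0 = 2 * dist u + 1" "hd p0 = s" "last p0 = u" "inv p0"
    using path_ex[OF uv(1)] by auto
  define m where "m = dist u"
  have lp0: "p0 ! (2*m) = u"
  proof -
    have "p0 \<noteq> []" using p0(1) by auto
    then show ?thesis using p0(1,3) last_conv_nth[of p0] by (simp add: m_def)
  qed
  define q where "q = p0 @ [v]"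
  have lq: "length q = 2*m+2" using p0(1) by (simp add: q_def m_def)
  have qa: "\<And>i. i < 2*m+1 \<Longrightarrow> q ! i = p0 ! i" using p0(1) by (simp add: q_def nth_append m_def)
  have qv: "q ! (2*m+1) = v" using p0(1) by (simp add: q_def nth_append m_def)
  have I: "\<And>i. i < 2*m+1 \<Longrightarrow> (even i \<longrightarrow> p0!i \<in> U \<and> dist (p0!i) = i div 2) \<and>
     (odd i \<longrightarrow> p0!i \<in> V \<and> (p0!(i-1), p0!i) \<in> E \<and> (p0!(i-1), p0!i) \<notin> M \<and> (p0!(i+1), p0!i) \<in> M)"
    using p0(4) p0(1) unfolding inv_def m_def by auto
  have ev: "\<And>i. i < 2*m+2 \<Longrightarrow> even i \<Longrightarrow> q!i \<in> U \<and> dist (q!i) = i div 2"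
  proof -
    fix i assume "i < 2*m+2" "even i"
    then have "i < 2*m+1" by presburger
    then show "q!i \<in> U \<and> dist (q!i) = i div 2" using I qa \<open>even i\<close> by auto
  qed
  have od: "\<And>i. i < 2*m+1 \<Longrightarrow> odd i \<Longrightarrow> q!i \<in> V \<and> (q!(i+1), q!i) \<in> M \<and> (q!(i-1), q!i) \<in> E \<and> (q!(i-1), q!i) \<notin> M"
  proof -
    fix i assume i: "i < 2*m+1" "odd i"
    then have "i + 1 < 2*m+1" "i - 1 < 2*m+1" by presburger+
    then show "q!i \<in> V \<and> (q!(i+1), q!i) \<in> M \<and> (q!(i-1), q!i) \<in> E \<and> (q!(i-1), q!i) \<notin> M"
      using I[OF i(1)] qa i by auto
  qed
  have dist_q: "distinct q"
    unfolding distinct_conv_nth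
  proof (intro allI impI)
    fix i j assume ij: "i < length q" "j < length q" "i \<noteq> j"
    show "q ! i \<noteq> q ! j"
    proof (cases "even i")
      case ei: True
      show ?thesis
      proof (cases "even j")
        case True
        have "i div 2 \<noteq> j div 2" using ei True ij(3) by presburger
        then show ?thesis using ev[of i] ev[of j] ei True ij lq by metis
      next
        case False
        have "q!j \<in> V" using False ij lq od[of j] qv vV by (cases "j = 2*m+1") auto
        then show ?thesis using ev[of i] ei ij lq disj by auto
      qed
    next
      case oi: False
      have qiV: "q!i \<in> V" using oi ij lq od[of i] qv vV by (cases "i = 2*m+1") auto
      show ?thesis
      proof (cases "even j")
        case True
        then show ?thesis using ev[of j] qiV ij lq disj by auto
      next
        case oj: False
        have mt: "\<And>x. x < 2*m+1 \<Longrightarrow> odd x \<Longrightarrow> matched M (q!x)"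
          using od matched_V by blast
        show ?thesis
        proof (cases "i = 2*m+1")
          case True
          then have "j < 2*m+1" using ij lq by auto
          then show ?thesis using mt[of j] oj True qv uv(3) by auto
        next
          case False
          then have i1: "i < 2*m+1" using ij lq by auto
          show ?thesis
          proof (cases "j = 2*m+1")
            case True
            then show ?thesis using mt[of i] i1 oi qv uv(3) by auto
          next
            case False
            then have j1: "j < 2*m+1" using ij lq by auto
            show ?thesis
            proof
              assume eq: "q ! i = q ! j"
              have "q!(i+1) = q!(j+1)" using od[OF i1 oi] od[OF j1 oj] eq M_uniq by metis
              moreover have "i+1 < 2*m+2" "j+1 < 2*m+2" "even (i+1)" "even (j+1)" using i1 j1 oi oj by auto
              ultimately have "(i+1) div 2 = (j+1) div 2" using ev by metis
              then show False using ij(3) oi oj by presburger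
            qed
          qed
        qed
      qed
    qed
  qed
  have edges: "\<forall>i < length q - 1. has_edge E (q ! i) (q ! Suc i) \<and> (has_edge M (q ! i) (q ! Suc i) \<longleftrightarrow> odd i)"
  proof (intro allI impI)
    fix i assume i: "i < length q - 1"
    then have i1: "i < 2*m+1" using lq by simp
    show "has_edge E (q ! i) (q ! Suc i) \<and> (has_edge M (q ! i) (q ! Suc i) \<longleftrightarrow> odd i)"
    proof (cases "even i")
      case True
      have e1: "(q!i, q!Suc i) \<in> E \<and> (q!i, q!Suc i) \<notin> M"
      proof (cases "i = 2*m")
        case True
        then show ?thesis using qa[of i] lp0 qv uv uvM by auto
      next
        case False
        then have "Suc i < 2*m+1" "odd (Suc i)" using i1 \<open>even i\<close> by presburger+
        then show ?thesis using od[of "Suc i"] by auto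
      qed
      have "q!i \<in> U" using ev[of i] i1 True by auto
      then have "(q!Suc i, q!i) \<notin> M" using ME EUV disj by blast
      then show ?thesis using e1 True unfolding has_edge_def by auto
    next
      case False
      then have "(q!(i+1), q!i) \<in> M" using od[OF i1] by auto
      then show ?thesis using False ME unfolding has_edge_def by auto
    qed
  qed
  have hq: "hd q = s" using p0 by (cases p0) (auto simp: q_def)
  have "\<not> matched M (hd q)" using hq sun by simp
  moreover have "last q = v" by (simp add: q_def)
  ultimately have "augmenting_path E M q"
    unfolding augmenting_path_def using lq dist_q edges uv(3) by auto
  moreover have "length q - 1 \<le> 2 * k + 1" using lq dist_le[OF uv(1)] m_def by simp
  ultimately show ?thesis using hq by blast
qed

lemma finE: "finite E" using finU finV EUV finite_subset by blast

lemma degU_eq: "u \<in> U \<Longrightarrow> degree E u = card {v. (u, v) \<in> E}"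
  unfolding degree_def using EUV disj by (metis (no_types, lifting) EU EV disjoint_iff)

lemma growth:
  assumes ng: "\<not> good k"
  shows "card (R (Suc k)) * f \<ge> card (R k) * d"
proof -
  define N where "N = {v. \<exists>u\<in>R k. (u, v) \<in> E}"
  have NV: "N \<subseteq> V" using EV by (auto simp: N_def)
  have finN: "finite N" using NV finV finite_subset by blast
  have finR: "finite (R k)" using R_sub finU finite_subset by blast
  define Ek where "Ek = Sigma (R k) (\<lambda>u. {v. (u, v) \<in> E})"
  have fin1: "\<And>u. finite {v. (u, v) \<in> E}"
    using finE by (rule finite_subset[rotated, OF finite_imageI[of E snd]]) force
  have c1: "card Ek = (\<Sum>u\<in>R k. card {v. (u, v) \<in> E})"
    unfolding Ek_def using finR fin1 by simp
  have "(\<Sum>u\<in>R k. card {v. (u, v) \<in> E}) \<ge> (\<Sum>u\<in>R k. d)"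
    by (rule sum_mono) (use degU degU_eq R_sub in fastforce)
  then have c1': "card Ek \<ge> card (R k) * d" using c1 by simp
  have sw: "prod.swap ` Ek = Sigma N (\<lambda>v. {u\<in>R k. (u, v) \<in> E})"
    unfolding Ek_def N_def by force
  have c2: "card Ek = (\<Sum>v\<in>N. card {u\<in>R k. (u, v) \<in> E})"
  proof -
    have "card Ek = card (prod.swap ` Ek)" by (simp add: card_image)
    also have "\<dots> = (\<Sum>v\<in>N. card {u\<in>R k. (u, v) \<in> E})" unfolding sw
      using finN finR by simp
    finally show ?thesis .
  qed
  have "(\<Sum>v\<in>N. card {u\<in>R k. (u, v) \<in> E}) \<le> (\<Sum>v\<in>N. f)"
  proof (rule sum_mono)
    fix v assume v: "v \<in> N"
    have "{y. (v, y) \<in> E \<or> (y, v) \<in> E} \<subseteq> U \<union> V" using EUV by auto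
    then have "finite {y. (v, y) \<in> E \<or> (y, v) \<in> E}" using finU finV finite_subset by blast
    then have "card {u\<in>R k. (u, v) \<in> E} \<le> degree E v"
      unfolding degree_def by (rule card_mono) auto
    then show "card {u\<in>R k. (u, v) \<in> E} \<le> f" using degV NV v by fastforce
  qed
  then have c2': "card Ek \<le> card N * f" using c2 by simp
  define g where "g v = (SOME u. (u, v) \<in> M)" for v
  have gM: "\<And>v. v \<in> N \<Longrightarrow> (g v, v) \<in> M"
  proof -
    fix v assume v: "v \<in> N"
    then obtain u where "u \<in> R k" "(u, v) \<in> E" by (auto simp: N_def)
    then have "matched M v" using ng unfolding good_def by auto
    then have "\<exists>u. (u, v) \<in> M" using matched_V NV v by auto
    then show "(g v, v) \<in> M" unfolding g_def by (rule someI_ex)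
  qed
  have inj: "inj_on g N"
  proof (rule inj_onI)
    fix x y assume "x \<in> N" "y \<in> N" "g x = g y"
    then show "x = y" using gM M_uniq2 by metis
  qed
  have gR: "g ` N \<subseteq> R (Suc k)"
  proof
    fix w assume "w \<in> g ` N"
    then obtain v where v: "v \<in> N" "w = g v" by auto
    then obtain u where u: "u \<in> R k" "(u, v) \<in> E" by (auto simp: N_def)
    show "w \<in> R (Suc k)"
    proof (cases "(u, v) \<in> M")
      case True
      then have "w = u" using gM[OF v(1)] v(2) M_uniq by metis
      then show ?thesis using u by simp
    next
      case False
      then show ?thesis using u gM[OF v(1)] v(2) by auto
    qed
  qed
  have finR1: "finite (R (Suc k))" using R_sub finU finite_subset by blast
  have "card N \<le> card (R (Suc k))"
    using card_inj_on_le[OF inj gR finR1] .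
  then have "card N * f \<le> card (R (Suc k)) * f" by simp
  then show ?thesis using c1' c2' by linarith
qed

lemma f_pos: "f \<ge> 1"
proof -
  have "degree E s \<ge> 1" using degU sU fd by fastforce
  then have "card {v. (s, v) \<in> E} \<noteq> 0" using degU_eq sU by simp
  then obtain v where v: "(s, v) \<in> E" by (metis (no_types, lifting) Collect_empty_eq card.empty)
  have vV: "v \<in> V" using v EV by auto
  have "{y. (v, y) \<in> E \<or> (y, v) \<in> E} \<subseteq> U \<union> V" using EUV by auto
  then have "finite {y. (v, y) \<in> E \<or> (y, v) \<in> E}" using finU finV finite_subset by blast
  moreover have "s \<in> {y. (v, y) \<in> E \<or> (y, v) \<in> E}" using v by auto
  ultimately have "degree E v \<ge> 1" unfolding degree_def
    by (metis One_nat_def Suc_leI card_gt_0_iff empty_iff)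
  then show ?thesis using degV vV by fastforce
qed

lemma iter:
  assumes "\<forall>j<k. \<not> good j"
  shows "card (R k) \<ge> k + 1 \<and> real (card (R k)) * real f ^ k \<ge> (real f + 1) ^ k"
  using assms
proof (induction k)
  case 0
  then show ?case by simp
next
  case (Suc k)
  then have IH: "card (R k) \<ge> k + 1" "real (card (R k)) * real f ^ k \<ge> (real f + 1) ^ k" by auto
  have g: "card (R (Suc k)) * f \<ge> card (R k) * d" using growth Suc.prems by auto
  have "card (R k) * d \<ge> card (R k) * (f + 1)" using fd by (intro mult_left_mono) auto
  then have g2: "card (R (Suc k)) * f \<ge> card (R k) * f + card (R k)" using g by simp
  then have "card (R (Suc k)) * f > card (R k) * f" using IH(1) by linarith
  then have "card (R (Suc k)) > card (R k)" by (meson mult_less_cancel2)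
  then have A: "card (R (Suc k)) \<ge> Suc k + 1" using IH(1) by simp
  have "real (card (R k) * f + card (R k)) \<le> real (card (R (Suc k)) * f)"
    using g2 by (simp only: of_nat_le_iff)
  then have g3: "real (card (R (Suc k))) * real f \<ge> real (card (R k)) * (real f + 1)"
    by (simp add: distrib_left)
  have "(real f + 1) ^ Suc k = (real f + 1) ^ k * (real f + 1)" by (simp only: power_Suc2)
  also have "\<dots> \<le> (real (card (R k)) * real f ^ k) * (real f + 1)"
    using IH(2) by (intro mult_right_mono) auto
  also have "\<dots> = (real (card (R k)) * (real f + 1)) * real f ^ k"
    by (simp only: mult.commute mult.left_commute)
  also have "\<dots> \<le> (real (card (R (Suc k))) * real f) * real f ^ k"
    using g3 by (intro mult_right_mono) auto
  also have "\<dots> = real (card (R (Suc k))) * real f ^ Suc k"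
    by (simp add: mult.assoc)
  finally have "real (card (R (Suc k))) * real f ^ Suc k \<ge> (real f + 1) ^ Suc k" .
  then show ?case using A by simp
qed

lemma main:
  assumes n2: "card U + card V \<ge> 2"
  shows "\<exists>p. augmenting_path E M p \<and> hd p = s \<and>
              real (length p - 1) \<le> 4 * real d * ln (real (card U + card V))"
proof -
  define n where "n = card U + card V"
  have ex: "\<exists>k. good k"
  proof (rule ccontr)
    assume "\<not> (\<exists>k. good k)"
    then have "\<forall>j<card U. \<not> good j" by blast
    then have "card (R (card U)) \<ge> card U + 1" using iter[of "card U"] by simp
    moreover have "card (R (card U)) \<le> card U" using card_mono[OF finU R_sub] .
    ultimately show False by simp
  qed
  define k0 where "k0 = (LEAST k. good k)"
  have gk: "good k0" unfolding k0_def by (rule LeastI_ex[OF ex])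
  have ngk: "\<forall>j<k0. \<not> good j" unfolding k0_def
  proof (intro allI impI)
    fix j assume "j < (LEAST k. good k)"
    then show "\<not> good j" by (rule not_less_Least)
  qed
  obtain p where p: "augmenting_path E M p" "hd p = s" "length p - 1 \<le> 2 * k0 + 1"
    using aug_ex[OF gk] by blast
  have f1: "real f \<ge> 1" using f_pos by simp
  have "(real f + 1) ^ k0 \<le> real (card (R k0)) * real f ^ k0" using iter[OF ngk] by simp
  also have "\<dots> \<le> real n * real f ^ k0"
  proof -
    have "card (R k0) \<le> card U" using card_mono[OF finU R_sub] .
    then have "real (card (R k0)) \<le> real n" unfolding n_def by simp
    then show ?thesis by (simp add: mult_right_mono)
  qed
  finally have X: "(real f + 1) ^ k0 \<le> real n * real f ^ k0" .
  have fk: "real f ^ k0 > 0" using f1 by simp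
  have "((real f + 1) / real f) ^ k0 = (real f + 1) ^ k0 / real f ^ k0" by (rule power_divide)
  also have "\<dots> \<le> real n" using X fk by (simp add: pos_divide_le_eq)
  finally have "((real f + 1) / real f) ^ k0 \<le> real n" .
  moreover have pp: "((real f + 1) / real f) ^ k0 > 0" using f1 by simp
  ultimately have "ln (((real f + 1) / real f) ^ k0) \<le> ln (real n)"
    by (rule ln_mono)
  moreover have "ln (((real f + 1) / real f) ^ k0) = real k0 * ln ((real f + 1) / real f)"
    by (rule ln_realpow)
  ultimately have L: "real k0 * ln ((real f + 1) / real f) \<le> ln (real n)" by simp
  have "ln (real f / (real f + 1)) \<le> real f / (real f + 1) - 1"
    using f1 by (intro ln_le_minus_one) auto
  moreover have "ln (real f / (real f + 1)) = - ln ((real f + 1) / real f)"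
    using f1 by (simp add: ln_div)
  moreover have "real f / (real f + 1) - 1 = - 1 / (real f + 1)"
    using f1 by (simp add: field_simps)
  ultimately have "ln ((real f + 1) / real f) \<ge> 1 / (real f + 1)" by simp
  moreover have "1 / (real f + 1) \<ge> 1 / real d" using fd f1
    by (intro divide_left_mono) auto
  ultimately have lnb: "ln ((real f + 1) / real f) \<ge> 1 / real d" by simp
  have dpos: "real d > 0" using fd by simp
  have "real k0 * (1 / real d) \<le> real k0 * ln ((real f + 1) / real f)"
    using lnb by (intro mult_left_mono) auto
  then have "real k0 / real d \<le> real k0 * ln ((real f + 1) / real f)" by simp
  then have "real k0 / real d \<le> ln (real n)" using L by simp
  then have "real k0 \<le> ln (real n) * real d" using dpos by (simp add: pos_divide_le_eq)
  then have K: "real k0 \<le> real d * ln (real n)" by (simp only: mult.commute)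
  have "ln 2 \<le> ln (real n)" using n2 unfolding n_def by simp
  moreover have l2: "ln (2::real) \<ge> 1/2"
  proof -
    have "ln (1/2::real) \<le> 1/2 - 1" by (rule ln_le_minus_one) simp
    moreover have "ln (1/2::real) = - ln 2" by (simp add: ln_div)
    ultimately show ?thesis by simp
  qed
  ultimately have ln1: "ln (real n) \<ge> 1/2" by simp
  have "real d \<ge> 1" using fd by simp
  then have "real d * ln (real n) \<ge> 1 * (1/2)" using ln1 by (intro mult_mono) auto
  then have D: "real d * ln (real n) \<ge> 1/2" by simp
  have "real (length p - 1) \<le> real (2 * k0 + 1)" using p(3) by (simp only: of_nat_le_iff)
  then have "real (length p - 1) \<le> 2 * real k0 + 1" by simp
  then have "real (length p - 1) \<le> 4 * (real d * ln (real n))" using K D by linarith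
  then have "real (length p - 1) \<le> 4 * real d * ln (real n)" by (simp add: mult.assoc)
  then show ?thesis using p unfolding n_def by blast
qed

end

theorem lemma3p3:
  shows "\<exists>C::real. C > 0 \<and>
    (\<forall>U V E (d::nat) (f::nat) M s.
       bipartite_graph U V E \<and> card U + card V \<ge> 2 \<and>
       (\<forall>u\<in>U. degree E u \<ge> d) \<and> (\<forall>v\<in>V. degree E v \<le> f) \<and> f < d \<and>
       matching E M \<and> s \<in> U \<and> \<not> matched M s
       \<longrightarrow> (\<exists>p. augmenting_path E M p \<and> hd p = s \<and>
              real (length p - 1) \<le> C * real d * ln (real (card U + card V))))"
proof (intro exI[of _ 4] conjI allI impI)
  show "(4::real) > 0" by simp
next
  fix U V E d f M s
  assume H: "bipartite_graph U V E \<and> card U + card V \<ge> 2 \<and>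
       (\<forall>u\<in>U. degree E u \<ge> d) \<and> (\<forall>v\<in>V. degree E v \<le> (f::nat)) \<and> f < (d::nat) \<and>
       matching E M \<and> s \<in> U \<and> \<not> matched M s"
  then interpret aug U V E d f M s by unfold_locales auto
  show "\<exists>p. augmenting_path E M p \<and> hd p = s \<and>
              real (length p - 1) \<le> 4 * real d * ln (real (card U + card V))"
    using main H by blast
qed

end
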